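(* For every integer $N\ge 2$, every $\delta<0$, every $\beta>0$ and every $\theta\ge 0$, and for $E\in\{E_r,E_p\}$, $$\frac{N^2\theta}{2}\Big(H_N+\frac{1}{N-1}\Big)\le E(\theta)\le N(N-1)\,\theta\,\big(H_N+1\big).$$
   Context: Fix an integer $N\ge 2$, a real number $\delta<0$, and $\beta>0$. For $\theta\in\mathbb{R}$ put $x=\beta(\theta+\delta)$. For $1\le i\le N-1$ define $u_{i,i+1}=\frac{i(N-i)}{N^2}(1+e^{-x})^{-1}$, $u_{i,i-1}=\frac{i(N-i)}{N^2}(1+e^{x})^{-1}$, $u_{i,i}=1-u_{i,i+1}-u_{i,i-1}$, and $u_{i,j}=0$ for $|i-j|\ge 2$. Let $U=(u_{ij})_{i,j=1}^{N-1}$ and $\mathcal{N}=(n_{ij})_{i,j=1}^{N-1}=(I-U)^{-1}$. Define $E_r(\theta)=\frac{\theta}{2}\sum_{i=1}^{N-1}(n_{1i}+n_{N-1,i})\,i$ and $E_p(\theta)=\frac{\theta}{2}\sum_{i=1}^{N-1}(n_{1i}+n_{N-1,i})\,(N-i)$. The harmonic number is defined here as $H_N=\sum_{j=1}^{N-1}\frac1j$ (note the sum stops at $N-1$). *)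

theory Defs
  imports Complex_Main "Jordan_Normal_Form.Gauss_Jordan_Elimination"
begin

definition u_ent :: "nat \<Rightarrow> real \<Rightarrow> real \<Rightarrow> real \<Rightarrow> nat \<Rightarrow> nat \<Rightarrow> real" where
  "u_ent N \<delta> \<beta> \<theta> i j =
     (let x = \<beta> * (\<theta> + \<delta>);
          c = real (i * (N - i)) / (real N)^2;
          up = c * inverse (1 + exp (-x));
          down = c * inverse (1 + exp x)
      in if j = i + 1 then up
         else if j + 1 = i then down
         else if j = i then 1 - up - down
         else 0)"

(* U as an (N-1)x(N-1) matrix; JNF indices are 0-based, entry (i,j) holds u_{i+1,j+1} *)
definition U_mat :: "nat \<Rightarrow> real \<Rightarrow> real \<Rightarrow> real \<Rightarrow> real mat" where
  "U_mat N \<delta> \<beta> \<theta> = mat (N - 1) (N - 1) (\<lambda>(i, j). u_ent N \<delta> \<beta> \<theta> (i + 1) (j + 1))"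

definition fund_mat :: "nat \<Rightarrow> real \<Rightarrow> real \<Rightarrow> real \<Rightarrow> real mat" where
  "fund_mat N \<delta> \<beta> \<theta> = the (mat_inverse (1\<^sub>m (N - 1) - U_mat N \<delta> \<beta> \<theta>))"

definition n_ent :: "nat \<Rightarrow> real \<Rightarrow> real \<Rightarrow> real \<Rightarrow> nat \<Rightarrow> nat \<Rightarrow> real" where
  "n_ent N \<delta> \<beta> \<theta> i j = fund_mat N \<delta> \<beta> \<theta> $$ (i - 1, j - 1)"

definition E_r :: "nat \<Rightarrow> real \<Rightarrow> real \<Rightarrow> real \<Rightarrow> real" where
  "E_r N \<delta> \<beta> \<theta> = \<theta> / 2 * (\<Sum>i = 1..N - 1.
      (n_ent N \<delta> \<beta> \<theta> 1 i + n_ent N \<delta> \<beta> \<theta> (N - 1) i) * real i)"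

definition E_p :: "nat \<Rightarrow> real \<Rightarrow> real \<Rightarrow> real \<Rightarrow> real" where
  "E_p N \<delta> \<beta> \<theta> = \<theta> / 2 * (\<Sum>i = 1..N - 1.
      (n_ent N \<delta> \<beta> \<theta> 1 i + n_ent N \<delta> \<beta> \<theta> (N - 1) i) * (real N - real i))"

definition H :: "nat \<Rightarrow> real" where
  "H N = (\<Sum>j = 1..N - 1. 1 / real j)"

end

theory Submission imports Defs "Jordan_Normal_Form.Determinant" begin

definition DD :: "real \<Rightarrow> real \<Rightarrow> nat \<Rightarrow> real" where
  "DD p q n = (\<Sum>k<n. p^k * q^(n-1-k))"

lemma DD_0[simp]: "DD p q 0 = 0" by (simp add: DD_def)
lemma DD_1[simp]: "DD p q (Suc 0) = 1" by (simp add: DD_def)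

lemma DD_Suc_q: "DD p q (Suc n) = q * DD p q n + p^n"
proof -
  have "DD p q (Suc n) = (\<Sum>k<n. p^k * q^(n-k)) + p^n" by (simp add: DD_def)
  also have "(\<Sum>k<n. p^k * q^(n-k)) = q * DD p q n"
    unfolding DD_def sum_distrib_left
    by (rule sum.cong) (auto simp: power_Suc[symmetric] Suc_diff_Suc)
  finally show ?thesis by simp
qed

lemma DD_Suc_p: "DD p q (Suc n) = p * DD p q n + q^n"
proof -
  have "DD p q (Suc n) = (\<Sum>k<Suc n. p^k * q^(n-k))" by (simp add: DD_def)
  also have "\<dots> = q^n + (\<Sum>k<n. p^(Suc k) * q^(n - Suc k))"
    by (subst sum.lessThan_Suc_shift) simp
  also have "(\<Sum>k<n. p^(Suc k) * q^(n - Suc k)) = p * DD p q n"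
    unfolding DD_def sum_distrib_left by (rule sum.cong) auto
  finally show ?thesis by simp
qed

lemma DD_rec: assumes "p + q = 1"
  shows "DD p q (Suc (Suc n)) = DD p q (Suc n) - p*q*DD p q n"
proof -
  have a: "DD p q (Suc (Suc n)) = q * DD p q (Suc n) + p^(Suc n)" by (rule DD_Suc_q)
  have b: "DD p q (Suc n) = q * DD p q n + p^n" by (rule DD_Suc_q)
  have "p^(Suc n) = p * DD p q (Suc n) - p*q*DD p q n" using b by (simp add: algebra_simps)
  with a have "DD p q (Suc (Suc n)) = (p+q) * DD p q (Suc n) - p*q*DD p q n"
    by (simp add: algebra_simps)
  with assms show ?thesis by simp
qed

lemma alg3: assumes h1: "(Y3::real) = Y2 - k*Y1" and h2: "B3 = B2 - k*B1" and h3: "B2 = B1 - k*B0"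
  and h4: "Y1 = A1*B1 - k*A0*B0" and h5: "Y2 = A1*B2 - k*A0*B1" shows "Y3 = A1*B3 - k*A0*B2"
  unfolding h1 h2 h4 h5 h3 by (simp add: algebra_simps)

lemma DD_conv: assumes "p + q = 1"
  shows "DD p q (Suc (a+b)) = DD p q (Suc a) * DD p q (Suc b) - (p*q)*DD p q a * DD p q b
    \<and> DD p q (Suc (Suc (a+b))) = DD p q (Suc a) * DD p q (Suc (Suc b)) - (p*q)*DD p q a * DD p q (Suc b)"
proof (induction b)
  case 0
  have "DD p q (Suc (Suc 0)) = 1" using DD_Suc_q[of p q 1] assms by simp
  then show ?case using DD_rec[OF assms, of a] by simp
next
  case (Suc b)
  have "DD p q (Suc (Suc (Suc (a+b)))) = DD p q (Suc a) * DD p q (Suc (Suc (Suc b))) - (p*q)*DD p q a * DD p q (Suc (Suc b))"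
    apply (rule alg3[OF DD_rec[OF assms] DD_rec[OF assms] DD_rec[OF assms]])
    using Suc by auto
  then show ?case using Suc by simp
qed

lemma DD_pos: assumes "p > 0" "q > 0" "n \<ge> 1" shows "DD p q n > 0"
proof -
  have "0 < p^0 * q^(n-1-0)" using assms by simp
  also have "\<dots> \<le> DD p q n" unfolding DD_def
    by (rule member_le_sum) (use assms in auto)
  finally show ?thesis .
qed

definition gg :: "real \<Rightarrow> real \<Rightarrow> nat \<Rightarrow> nat \<Rightarrow> nat \<Rightarrow> real" where
  "gg p q N K I = (if K \<le> I then DD p q K * DD p q (N-I) * p^(I-K)
                   else DD p q I * DD p q (N-K) * q^(K-I)) / DD p q N"

lemma gg_q: assumes "I \<le> K" shows "gg p q N K I = DD p q I * DD p q (N-K) * q^(K-I) / DD p q N"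
  using assms by (auto simp: gg_def)

lemma gg_p: assumes "K \<le> I" shows "gg p q N K I = DD p q K * DD p q (N-I) * p^(I-K) / DD p q N"
  using assms by (auto simp: gg_def)

lemma gg_ident:
  assumes pq: "p + q = 1" and pos: "p > 0" "q > 0" and K: "1 \<le> K" "K < N" and I: "1 \<le> I" "I < N"
  shows "gg p q N K I - p * gg p q N K (I-1) - q * gg p q N K (I+1) = (if K = I then 1 else 0)"
proof -
  have DN: "DD p q N > 0" using DD_pos[OF pos] K by simp
  let ?D = "DD p q"
  have key: "?D N * gg p q N K I - p * (?D N * gg p q N K (I-1)) - q * (?D N * gg p q N K (I+1))
        = (if K = I then ?D N else 0)"
  proof (cases "I < K")
    case True
    then obtain e where e: "K = I + e + 1" by (metis add.commute add_Suc less_iff_Suc_add plus_1_eq_Suc)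
    obtain m where m: "I = Suc m" using I by (cases I) auto
    have r: "?D (Suc (Suc m)) = ?D (Suc m) - p*q*?D m" by (rule DD_rec[OF pq])
    have h1: "?D N * gg p q N K I = ?D I * ?D (N-K) * q^(e+1)"
      using gg_q[of I K] DN e by simp
    have h2: "?D N * gg p q N K (I-1) = ?D m * ?D (N-K) * q^(e+2)"
      using gg_q[of "I-1" K] DN e m by simp
    have h3: "?D N * gg p q N K (I+1) = ?D (Suc (Suc m)) * ?D (N-K) * q^e"
      using gg_q[of "I+1" K] DN e m by simp
    show ?thesis unfolding h1 h2 h3 using True m
      by (simp add: r power_add algebra_simps)
  next
    case False
    show ?thesis
    proof (cases "K < I")
      case True
      then obtain e where e: "I = K + e + 1" by (metis add.commute add_Suc less_iff_Suc_add plus_1_eq_Suc)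
      obtain m where m: "N - I = Suc m" using I by (cases "N - I") auto
      have r: "?D (Suc (Suc m)) = ?D (Suc m) - p*q*?D m" by (rule DD_rec[OF pq])
      have h1: "?D N * gg p q N K I = ?D K * ?D (Suc m) * p^(e+1)"
        using gg_p[of K I] DN e m by simp
      have h2: "?D N * gg p q N K (I-1) = ?D K * ?D (Suc (Suc m)) * p^e"
      proof -
        have "N - (I-1) = Suc (Suc m)" using m e I by arith
        then show ?thesis using gg_p[of K "I-1"] DN e by simp
      qed
      have h3: "?D N * gg p q N K (I+1) = ?D K * ?D m * p^(e+2)"
        using gg_p[of K "I+1"] DN e m by (simp add: diff_Suc split: nat.splits)
      show ?thesis unfolding h1 h2 h3 using True
        by (simp add: r power_add algebra_simps)
    next
      case False2: False
      with False have KI: "K = I" by simp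
      obtain a where a: "K = Suc a" using K by (cases K) auto
      obtain b where b: "N - K = Suc b" using K by (cases "N - K") auto
      have Nab: "N = Suc (Suc (a+b))" using a b K by simp
      have c: "?D (Suc (Suc (a+b))) = ?D (Suc a) * ?D (Suc (Suc b)) - (p*q)*?D a * ?D (Suc b)"
        using DD_conv[OF pq] by blast
      have r: "?D (Suc (Suc b)) = ?D (Suc b) - p*q*?D b" by (rule DD_rec[OF pq])
      have h1: "?D N * gg p q N K I = ?D (Suc a) * ?D (Suc b)"
        using gg_p[of K I] DN KI a b by simp
      have h2: "?D N * gg p q N K (I-1) = ?D a * ?D (Suc b) * q"
      proof -
        have "I - 1 = a" "K - (I - 1) = 1" using a KI by auto
        then show ?thesis using gg_q[of "I-1" K] DN KI b by simp
      qed
      have h3: "?D N * gg p q N K (I+1) = ?D (Suc a) * ?D b * p"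
        using gg_p[of K "I+1"] DN KI a b by (simp add: diff_Suc split: nat.splits)
      show ?thesis unfolding h1 h2 h3 using KI Nab c r
        by (simp add: algebra_simps)
    qed
  qed
  have "?D N * (gg p q N K I - p * gg p q N K (I-1) - q * gg p q N K (I+1)) = ?D N * (if K = I then 1 else 0)"
    using key by (simp add: algebra_simps)
  then show ?thesis using DN by simp
qed

definition pp :: "real \<Rightarrow> real \<Rightarrow> real \<Rightarrow> real" where
  "pp \<delta> \<beta> \<theta> = inverse (1 + exp (-(\<beta> * (\<theta> + \<delta>))))"
definition qq :: "real \<Rightarrow> real \<Rightarrow> real \<Rightarrow> real" where
  "qq \<delta> \<beta> \<theta> = inverse (1 + exp (\<beta> * (\<theta> + \<delta>)))"

lemma pq_facts: "pp \<delta> \<beta> \<theta> + qq \<delta> \<beta> \<theta> = 1" "pp \<delta> \<beta> \<theta> > 0" "qq \<delta> \<beta> \<theta> > 0"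
proof -
  let ?x = "\<beta> * (\<theta> + \<delta>)"
  have e: "exp (-?x) = inverse (exp ?x)" by (simp add: exp_minus)
  have pos: "exp ?x + 1 > 0" by (simp add: add_pos_pos)
  have "inverse (1 + inverse (exp ?x)) = exp ?x / (exp ?x + 1)"
    by (simp add: field_simps)
  moreover have "inverse (1 + exp ?x) = 1 / (exp ?x + 1)" by (simp add: field_simps)
  moreover have "exp ?x / (exp ?x + 1) + 1 / (exp ?x + 1) = 1"
    using pos by (simp add: add_divide_distrib[symmetric])
  ultimately show "pp \<delta> \<beta> \<theta> + qq \<delta> \<beta> \<theta> = 1" unfolding pp_def qq_def e
    by simp
  show "pp \<delta> \<beta> \<theta> > 0" "qq \<delta> \<beta> \<theta> > 0" unfolding pp_def qq_def
    by (simp_all add: add_pos_pos)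
qed

definition cc :: "nat \<Rightarrow> nat \<Rightarrow> real" where
  "cc N J = real (J * (N - J)) / (real N)^2"

definition aa :: "real \<Rightarrow> real \<Rightarrow> nat \<Rightarrow> nat \<Rightarrow> real" where
  "aa p q J I = (if I = J + 1 then -p else if I + 1 = J then -q else if I = J then 1 else 0)"

lemma cc_pos: "1 \<le> J \<Longrightarrow> J < N \<Longrightarrow> cc N J > 0"
  unfolding cc_def by simp

lemma u_decomp:
  "(if J = I then 1 else 0) - u_ent N \<delta> \<beta> \<theta> J I = cc N J * aa (pp \<delta> \<beta> \<theta>) (qq \<delta> \<beta> \<theta>) J I"
proof -
  have s: "pp \<delta> \<beta> \<theta> + qq \<delta> \<beta> \<theta> = 1" by (rule pq_facts)
  have u: "u_ent N \<delta> \<beta> \<theta> J I = (if I = J + 1 then cc N J * pp \<delta> \<beta> \<theta>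
         else if I + 1 = J then cc N J * qq \<delta> \<beta> \<theta>
         else if I = J then 1 - cc N J * pp \<delta> \<beta> \<theta> - cc N J * qq \<delta> \<beta> \<theta> else 0)"
    unfolding u_ent_def Let_def cc_def pp_def qq_def by simp
  have "cc N J * pp \<delta> \<beta> \<theta> + cc N J * qq \<delta> \<beta> \<theta> = cc N J"
    using s by (simp flip: distrib_left)
  then show ?thesis unfolding u aa_def by auto
qed

lemma sum_delta_pred: "(\<Sum>j\<in>{0..<(M::nat)}. if j + 1 = i then g j else (0::real)) = (if 0 < i \<and> i - 1 < M then g (i-1) else 0)"
proof (cases i)
  case 0 then show ?thesis by simp
next
  case (Suc i') then show ?thesis by (simp add: sum.delta)
qed

lemma tridiag_sum:
  assumes "i < M"
  shows "(\<Sum>j\<in>{0..<M}. f j * aa p q (j+1) (i+1)) =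
     f i - (if 0 < i then p * f (i-1) else 0) - (if i + 1 < M then q * f (i+1) else 0)"
proof -
  have "\<And>j. f j * aa p q (j+1) (i+1) = (if j = i then f j else 0) - (if j + 1 = i then p * f j else 0)
          - (if j = i + 1 then q * f j else 0)"
    unfolding aa_def by auto
  then have "(\<Sum>j\<in>{0..<M}. f j * aa p q (j+1) (i+1)) =
     (\<Sum>j\<in>{0..<M}. if j = i then f j else 0) - (\<Sum>j\<in>{0..<M}. if j + 1 = i then p * f j else 0)
     - (\<Sum>j\<in>{0..<M}. if j = i + 1 then q * f j else 0)"
    by (simp add: sum_subtractf)
  also have "\<dots> = f i - (if 0 < i then p * f (i-1) else 0) - (if i + 1 < M then q * f (i+1) else 0)"
    unfolding sum_delta_pred using assms by (simp add: sum.delta')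
  finally show ?thesis .
qed

definition XM :: "nat \<Rightarrow> real \<Rightarrow> real \<Rightarrow> real mat" where
  "XM N p q = mat (N-1) (N-1) (\<lambda>(k,i). gg p q N (k+1) (i+1) / cc N (i+1))"

lemma gg_0: "1 \<le> K \<Longrightarrow> gg p q N K 0 = 0" by (simp add: gg_def)
lemma gg_N: "K \<le> N \<Longrightarrow> gg p q N K N = 0" by (simp add: gg_def)

lemma XA_one:
  assumes N: "N \<ge> 2"
  shows "XM N (pp \<delta> \<beta> \<theta>) (qq \<delta> \<beta> \<theta>) * (1\<^sub>m (N-1) - U_mat N \<delta> \<beta> \<theta>) = 1\<^sub>m (N-1)"
proof (rule eq_matI)
  let ?p = "pp \<delta> \<beta> \<theta>" and ?q = "qq \<delta> \<beta> \<theta>" and ?M = "N - 1"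
  fix k i assume k: "k < dim_row (1\<^sub>m ?M :: real mat)" and i: "i < dim_col (1\<^sub>m ?M :: real mat)"
  then have k': "k < ?M" and i': "i < ?M" by auto
  have "(XM N ?p ?q * (1\<^sub>m ?M - U_mat N \<delta> \<beta> \<theta>)) $$ (k, i)
      = (\<Sum>j\<in>{0..<?M}. (gg ?p ?q N (k+1) (j+1) / cc N (j+1)) *
             ((if j = i then 1 else 0) - u_ent N \<delta> \<beta> \<theta> (j+1) (i+1)))"
    using k' i' unfolding XM_def U_mat_def
    by (simp add: scalar_prod_def)
  also have "\<dots> = (\<Sum>j\<in>{0..<?M}. gg ?p ?q N (k+1) (j+1) * aa ?p ?q (j+1) (i+1))"
  proof (rule sum.cong[OF refl])
    fix j assume j: "j \<in> {0..<?M}"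
    have "(if j = i then 1 else 0) - u_ent N \<delta> \<beta> \<theta> (j+1) (i+1) = cc N (j+1) * aa ?p ?q (j+1) (i+1)"
      using u_decomp[of "j+1" "i+1" N \<delta> \<beta> \<theta>] by simp
    moreover have "cc N (j+1) > 0" using j by (intro cc_pos) auto
    ultimately show "(gg ?p ?q N (k+1) (j+1) / cc N (j+1)) *
             ((if j = i then 1 else 0) - u_ent N \<delta> \<beta> \<theta> (j+1) (i+1)) =
           gg ?p ?q N (k+1) (j+1) * aa ?p ?q (j+1) (i+1)" by simp
  qed
  also have "\<dots> = gg ?p ?q N (k+1) (i+1) - (if 0 < i then ?p * gg ?p ?q N (k+1) (i-1+1) else 0)
       - (if i + 1 < ?M then ?q * gg ?p ?q N (k+1) (i+1+1) else 0)"
    by (rule tridiag_sum[OF i'])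
  also have "\<dots> = gg ?p ?q N (k+1) (i+1) - ?p * gg ?p ?q N (k+1) (i+1-1) - ?q * gg ?p ?q N (k+1) (i+1+1)"
  proof -
    have a: "(if 0 < i then ?p * gg ?p ?q N (k+1) (i-1+1) else 0) = ?p * gg ?p ?q N (k+1) (i+1-1)"
      using gg_0[of "k+1"] by (cases i) auto
    have b: "(if i + 1 < ?M then ?q * gg ?p ?q N (k+1) (i+1+1) else 0) = ?q * gg ?p ?q N (k+1) (i+1+1)"
    proof (cases "i + 1 < ?M")
      case False
      then have "i+1+1 = N" using i' by simp
      then show ?thesis using False gg_N[of "k+1" N] k' by simp
    qed simp
    show ?thesis unfolding a b ..
  qed
  also have "\<dots> = (if k+1 = i+1 then 1 else 0)"
    by (rule gg_ident) (use pq_facts k' i' N in auto)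
  also have "\<dots> = 1\<^sub>m ?M $$ (k, i)" using k' i' by simp
  finally show "(XM N ?p ?q * (1\<^sub>m ?M - U_mat N \<delta> \<beta> \<theta>)) $$ (k, i) = 1\<^sub>m ?M $$ (k, i)" .
next
  show "dim_row (XM N (pp \<delta> \<beta> \<theta>) (qq \<delta> \<beta> \<theta>) * (1\<^sub>m (N-1) - U_mat N \<delta> \<beta> \<theta>)) = dim_row (1\<^sub>m (N-1) :: real mat)"
    by (simp add: XM_def)
  show "dim_col (XM N (pp \<delta> \<beta> \<theta>) (qq \<delta> \<beta> \<theta>) * (1\<^sub>m (N-1) - U_mat N \<delta> \<beta> \<theta>)) = dim_col (1\<^sub>m (N-1) :: real mat)"
    by (simp add: U_mat_def)
qed

lemma fund_eq:
  assumes N: "N \<ge> 2"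
  shows "fund_mat N \<delta> \<beta> \<theta> = XM N (pp \<delta> \<beta> \<theta>) (qq \<delta> \<beta> \<theta>)"
proof -
  let ?A = "1\<^sub>m (N-1) - U_mat N \<delta> \<beta> \<theta>" and ?X = "XM N (pp \<delta> \<beta> \<theta>) (qq \<delta> \<beta> \<theta>)"
  have A: "?A \<in> carrier_mat (N-1) (N-1)" unfolding U_mat_def by (rule minus_carrier_mat) simp
  have X: "?X \<in> carrier_mat (N-1) (N-1)" by (simp add: XM_def)
  have XA: "?X * ?A = 1\<^sub>m (N-1)" by (rule XA_one[OF N])
  have AX: "?A * ?X = 1\<^sub>m (N-1)" by (rule mat_mult_left_right_inverse[OF X A XA])
  show ?thesis
  proof (cases "mat_inverse ?A")
    case None
    have "?A \<in> Units (ring_mat TYPE(real) (N-1) ())"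
      using A X XA AX unfolding Units_def ring_mat_def by auto
    with mat_inverse(1)[OF A None, of "()"] show ?thesis by blast
  next
    case (Some B)
    from mat_inverse(2)[OF A Some] have AB: "?A * B = 1\<^sub>m (N-1)" and B: "B \<in> carrier_mat (N-1) (N-1)" by auto
    have "?X = ?X * (?A * B)" using AB X by simp
    also have "\<dots> = (?X * ?A) * B" using X A B by simp
    also have "\<dots> = B" using XA B by simp
    finally show ?thesis unfolding fund_mat_def Some by simp
  qed
qed

lemma DD_mix: assumes "a \<ge> 1"
  shows "DD p q a * p^b + DD p q (b+1) * q^(a-1) = DD p q (a+b) + p^b * q^(a-1)"
  using assms
proof (induction a rule: dec_induct)
  case base
  then show ?case by (simp add: add.commute)
next
  case (step a)
  have qa: "q^(Suc a - 1) = q * q^(a-1)" using step(1) by (cases a) auto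
  have "DD p q (Suc a) * p^b + DD p q (b+1) * q^(Suc a - 1)
      = q * (DD p q a * p^b + DD p q (b+1) * q^(a-1)) + p^(a+b)"
    unfolding qa DD_Suc_q by (simp add: algebra_simps power_add)
  also have "\<dots> = q * (DD p q (a+b) + p^b * q^(a-1)) + p^(a+b)" using step by simp
  also have "\<dots> = DD p q (Suc a + b) + p^b * q^(Suc a - 1)"
    unfolding qa by (simp add: DD_Suc_q algebra_simps)
  finally show ?case .
qed

lemma DD_ge: assumes pq: "p + q = 1" "p > 0" "q > 0" and N: "N \<ge> 2"
  shows "DD p q N \<le> DD p q (N-1)"
proof -
  have NS: "N = Suc (N-1)" using N by simp
  have "p^0 * q^(N-1-1-0) \<le> DD p q (N-1)" unfolding DD_def
    by (rule member_le_sum) (use N pq in auto)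
  then have "q^(N-2) \<le> DD p q (N-1)" by (simp add: numeral_2_eq_2 diff_diff_add)
  then have "q * q^(N-2) \<le> q * DD p q (N-1)" using pq by simp
  moreover have "q * q^(N-2) = q^(N-1)"
  proof -
    have "N - 1 = Suc (N-2)" using N by simp
    then show ?thesis by simp
  qed
  ultimately have "q^(N-1) \<le> q * DD p q (N-1)" by simp
  then have "DD p q N \<le> p * DD p q (N-1) + q * DD p q (N-1)"
    using DD_Suc_p[of p q "N-1"] NS by simp
  then show ?thesis using pq by (simp flip: distrib_right)
qed

lemma term_nonneg: assumes "p \<ge> 0" "q \<ge> 0" shows "(p^k - q^k) * (p^m - q^m) \<ge> (0::real)"
proof (cases "p \<le> q")
  case True
  then have "p^k \<le> q^k" "p^m \<le> q^m" using assms by (auto intro: power_mono)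
  then show ?thesis by (simp add: mult_nonpos_nonpos)
next
  case False
  then have "q^k \<le> p^k" "q^m \<le> p^m" using assms by (auto intro: power_mono)
  then show ?thesis by simp
qed

lemma DD_ratio: assumes pq: "p + q = 1" "p > 0" "q > 0" and N: "N \<ge> 2"
  shows "real N * DD p q (N-1) \<le> 2 * (real N - 1) * DD p q N"
proof -
  define n where "n = N - 1"
  have NS: "N = Suc n" using N n_def by simp
  have "2 * DD p q N = (p+q) * DD p q n + (p^n + q^n)"
    using DD_Suc_p[of p q n] DD_Suc_q[of p q n] NS
    by (simp add: algebra_simps)
  then have two: "2 * DD p q N = DD p q n + (p^n + q^n)" using pq(1) by simp
  have rfl: "(\<Sum>k<N. p^(n-k) * q^k) = DD p q N"
  proof -
    have "(\<Sum>k<N. p^(n-k) * q^k) = (\<Sum>k<N. (\<lambda>j. p^j * q^(n-j)) (N - Suc k))"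
      by (rule sum.cong) (auto simp: NS)
    also have "\<dots> = (\<Sum>j<N. p^j * q^(n-j))" by (rule sum.nat_diff_reindex)
    finally show ?thesis by (simp add: DD_def NS)
  qed
  have "0 \<le> (\<Sum>k<N. (p^k - q^k) * (p^(n-k) - q^(n-k)))"
    by (rule sum_nonneg) (use term_nonneg pq in auto)
  also have "\<dots> = (\<Sum>k<N. (p^n + q^n) - p^k * q^(n-k) - p^(n-k) * q^k)"
  proof (rule sum.cong[OF refl])
    fix k assume "k \<in> {..<N}"
    then have "k \<le> n" using NS by simp
    then have "p^n = p^k * p^(n-k)" "q^n = q^k * q^(n-k)" by (simp_all flip: power_add)
    then show "(p^k - q^k) * (p^(n-k) - q^(n-k)) = (p^n + q^n) - p^k * q^(n-k) - p^(n-k) * q^k"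
      by (simp add: algebra_simps)
  qed
  also have "\<dots> = real N * (p^n + q^n) - DD p q N - DD p q N"
  proof -
    have d: "(\<Sum>k<N. p^k * q^(n-k)) = DD p q N" by (simp add: DD_def n_def)
    show ?thesis by (simp only: sum_subtractf sum_constant card_lessThan d rfl)
  qed
  finally have "2 * DD p q N \<le> real N * (p^n + q^n)" by simp
  then have h: "2 * DD p q N \<le> real N * (p^n + q^n)" .
  have dn: "DD p q (N-1) = 2 * DD p q N - (p^n + q^n)" using two by (simp add: n_def)
  have "real N * DD p q (N-1) = 2 * real N * DD p q N - real N * (p^n + q^n)"
    unfolding dn by (simp add: algebra_simps)
  also have "\<dots> \<le> 2 * real N * DD p q N - 2 * DD p q N" using h by linarith
  also have "\<dots> = 2 * (real N - 1) * DD p q N" by (simp add: algebra_simps)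
  finally show ?thesis .
qed

lemma final_bound:
  fixes w t :: "nat \<Rightarrow> real" and N :: nat
  assumes N: "N \<ge> 2" and th: "\<theta> \<ge> 0" and Dn: "Dn > 0" and DK: "Dn \<le> K"
    and rat: "real N * K \<le> 2 * (real N - 1) * Dn"
    and wt: "\<And>i. i \<in> {1..N-1} \<Longrightarrow> 1 / (real N - 1) \<le> w i \<and> w i \<le> 1 \<and> 0 \<le> t i"
    and st: "(\<Sum>i=1..N-1. t i) = K" and sw: "(\<Sum>i=1..N-1. w i) = Hv"
  shows "real N ^ 2 * \<theta> / 2 * (Hv + 1 / (real N - 1)) \<le> \<theta> / 2 * (\<Sum>i=1..N-1. (K + t i) / Dn * real N ^ 2 * w i)
    \<and> \<theta> / 2 * (\<Sum>i=1..N-1. (K + t i) / Dn * real N ^ 2 * w i) \<le> real N * (real N - 1) * \<theta> * (Hv + 1)"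
proof -
  have N1: "real N - 1 > 0" using N by simp
  define S where "S = (\<Sum>i=1..N-1. (K + t i) * w i)"
  have eq: "\<theta> / 2 * (\<Sum>i=1..N-1. (K + t i) / Dn * real N ^ 2 * w i) = \<theta> * real N ^ 2 / (2 * Dn) * S"
    unfolding S_def sum_distrib_left by (rule sum.cong) (simp_all add: field_simps)
  have S_eq: "S = K * Hv + (\<Sum>i=1..N-1. t i * w i)"
    unfolding S_def sw[symmetric] by (simp add: algebra_simps sum.distrib sum_distrib_left)
  have lo: "(\<Sum>i=1..N-1. t i * w i) \<ge> (\<Sum>i=1..N-1. t i * (1 / (real N - 1)))"
  proof (rule sum_mono)
    fix i assume "i \<in> {1..N-1}"
    with wt have "1 / (real N - 1) \<le> w i" "0 \<le> t i" by auto
    then show "t i * (1 / (real N - 1)) \<le> t i * w i" by (rule mult_left_mono)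
  qed
  have lo2: "(\<Sum>i=1..N-1. t i * (1 / (real N - 1))) = K / (real N - 1)"
    unfolding sum_distrib_right[symmetric] st by simp
  have up: "(\<Sum>i=1..N-1. t i * w i) \<le> (\<Sum>i=1..N-1. t i)"
    by (rule sum_mono) (use wt in \<open>auto intro: mult_left_le\<close>)
  have Hv0: "Hv \<ge> 0" unfolding sw[symmetric]
  proof (rule sum_nonneg)
    fix i assume "i \<in> {1..N-1}"
    with wt have "1 / (real N - 1) \<le> w i" by auto
    moreover have "0 < 1 / (real N - 1)" using N1 by simp
    ultimately show "0 \<le> w i" by linarith
  qed
  have K0: "K > 0" using Dn DK by simp
  have S_lo: "S \<ge> K * (Hv + 1 / (real N - 1))"
    using S_eq lo lo2 by (simp add: algebra_simps)
  have S_lo2: "K * (Hv + 1 / (real N - 1)) \<ge> Dn * (Hv + 1 / (real N - 1))"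
    using DK Hv0 N1 by (intro mult_right_mono) auto
  have S_up: "S \<le> K * (Hv + 1)" using S_eq up st by (simp add: algebra_simps)
  have c0: "\<theta> * real N ^ 2 / (2 * Dn) \<ge> 0" using th Dn by simp
  have "real N ^ 2 * \<theta> / 2 * (Hv + 1 / (real N - 1)) = \<theta> * real N ^ 2 / (2 * Dn) * (Dn * (Hv + 1 / (real N - 1)))"
    using Dn by (simp add: field_simps)
  also have "\<dots> \<le> \<theta> * real N ^ 2 / (2 * Dn) * S"
    using S_lo S_lo2 c0 by (intro mult_left_mono) auto
  finally have L: "real N ^ 2 * \<theta> / 2 * (Hv + 1 / (real N - 1)) \<le> \<theta> * real N ^ 2 / (2 * Dn) * S" .
  have "\<theta> * real N ^ 2 / (2 * Dn) * S \<le> \<theta> * real N ^ 2 / (2 * Dn) * (K * (Hv + 1))"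
    using S_up c0 by (intro mult_left_mono) auto
  also have "\<dots> = (\<theta> * real N * (Hv + 1) / (2 * Dn)) * (real N * K)" by (simp add: power2_eq_square)
  also have "\<dots> \<le> (\<theta> * real N * (Hv + 1) / (2 * Dn)) * (2 * (real N - 1) * Dn)"
    using rat th Hv0 Dn by (intro mult_left_mono) auto
  also have "\<dots> = real N * (real N - 1) * \<theta> * (Hv + 1)" using Dn by (simp add: field_simps)
  finally show ?thesis using L eq by simp
qed

lemma G_eq: assumes N: "N \<ge> 2" and i: "1 \<le> i" "i \<le> N - 1"
  shows "gg p q N 1 i + gg p q N (N-1) i = (DD p q (N-1) + p^(i-1) * q^(N-1-i)) / DD p q N"
proof -
  have a: "gg p q N 1 i = DD p q (N-i) * p^(i-1) / DD p q N" using gg_p[of 1 i] i by simp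
  have b: "gg p q N (N-1) i = DD p q i * q^(N-1-i) / DD p q N"
  proof -
    have "N - (N-1) = 1" using N by simp
    then show ?thesis using gg_q[of i "N-1"] i by simp
  qed
  have m: "DD p q (N-i) * p^(i-1) + DD p q (i-1+1) * q^(N-i-1) = DD p q (N-i+(i-1)) + p^(i-1) * q^(N-i-1)"
    by (rule DD_mix) (use i in auto)
  have e1: "i - 1 + 1 = i" "N - i + (i - 1) = N - 1" "N - i - 1 = N - 1 - i" using i N by auto
  show ?thesis unfolding a b using m unfolding e1 by (simp add: add_divide_distrib[symmetric])
qed

lemma n_ent_eq: assumes N: "N \<ge> 2" and i: "1 \<le> i" "i \<le> N - 1" and K: "K = 1 \<or> K = N - 1"
  shows "n_ent N \<delta> \<beta> \<theta> K i = gg (pp \<delta> \<beta> \<theta>) (qq \<delta> \<beta> \<theta>) N K i / cc N i"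
proof -
  have "K - 1 < N - 1" "i - 1 < N - 1" "K - 1 + 1 = K" "i - 1 + 1 = i" using N i K by auto
  then show ?thesis unfolding n_ent_def fund_eq[OF N] XM_def by simp
qed

lemma sum_t: assumes N: "N \<ge> 2"
  shows "(\<Sum>i=1..N-1. p^(i-1) * q^(N-1-i)) = DD p q (N-1)"
proof -
  have "(\<Sum>i=1..N-1. p^(i-1) * q^(N-1-i)) = (\<Sum>k<N-1. p^(Suc k - 1) * q^(N-1-Suc k))"
    using sum.atLeast1_atMost_eq[of "\<lambda>i. p^(i-1) * q^(N-1-i)" "N-1"] by simp
  also have "\<dots> = DD p q (N-1)" unfolding DD_def by (rule sum.cong) auto
  finally show ?thesis .
qed

lemma sum_w1: "(\<Sum>i=1..N-1. 1 / real i) = H N" by (simp add: H_def)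

lemma sum_w2: assumes N: "N \<ge> 2" shows "(\<Sum>i=1..N-1. 1 / (real N - real i)) = H N"
proof -
  have "H N = (\<Sum>i=1..N-1. 1 / real (N - 1 + 1 - i))"
    unfolding H_def by (rule sum.atLeastAtMost_rev)
  also have "\<dots> = (\<Sum>i=1..N-1. 1 / (real N - real i))"
    by (rule sum.cong) (use N in \<open>auto simp: of_nat_diff\<close>)
  finally show ?thesis by simp
qed

lemma term_eq:
  assumes N: "N \<ge> 2" and i: "i \<in> {1..N-1}" and v: "v = real i \<or> v = real N - real i"
  shows "(n_ent N \<delta> \<beta> \<theta> 1 i + n_ent N \<delta> \<beta> \<theta> (N - 1) i) * v
    = (DD (pp \<delta> \<beta> \<theta>) (qq \<delta> \<beta> \<theta>) (N-1) + (pp \<delta> \<beta> \<theta>)^(i-1) * (qq \<delta> \<beta> \<theta>)^(N-1-i))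
       / DD (pp \<delta> \<beta> \<theta>) (qq \<delta> \<beta> \<theta>) N * real N ^ 2 * (1 / (real i * (real N - real i) / v))"
proof -
  let ?p = "pp \<delta> \<beta> \<theta>" and ?q = "qq \<delta> \<beta> \<theta>"
  have i1: "1 \<le> i" "i \<le> N - 1" using i by auto
  have c: "cc N i = real i * (real N - real i) / real N ^ 2"
    unfolding cc_def using i1 by (simp add: of_nat_diff)
  have ip: "real i > 0" "real N - real i > 0" using i1 by auto
  have vp: "v \<noteq> 0" using v ip by auto
  have "(n_ent N \<delta> \<beta> \<theta> 1 i + n_ent N \<delta> \<beta> \<theta> (N - 1) i)
      = (gg ?p ?q N 1 i + gg ?p ?q N (N-1) i) / cc N i"
  proof -
    have a: "n_ent N \<delta> \<beta> \<theta> 1 i = gg ?p ?q N 1 i / cc N i" by (rule n_ent_eq) (use N i1 in auto)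
    have b: "n_ent N \<delta> \<beta> \<theta> (N-1) i = gg ?p ?q N (N-1) i / cc N i" by (rule n_ent_eq) (use N i1 in auto)
    show ?thesis unfolding a b by (simp add: add_divide_distrib)
  qed
  also have "\<dots> = (DD ?p ?q (N-1) + ?p^(i-1) * ?q^(N-1-i)) / DD ?p ?q N / cc N i"
    unfolding G_eq[OF N i1] ..
  finally have e: "(n_ent N \<delta> \<beta> \<theta> 1 i + n_ent N \<delta> \<beta> \<theta> (N - 1) i)
      = (DD ?p ?q (N-1) + ?p^(i-1) * ?q^(N-1-i)) / DD ?p ?q N / cc N i" .
  show ?thesis unfolding e c using ip vp N by (simp add: field_simps)
qed

theorem theorem1:
  fixes N :: nat and \<delta> \<beta> \<theta> :: real
  assumes "N \<ge> 2" and "\<delta> < 0" and "\<beta> > 0" and "\<theta> \<ge> 0"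
  shows "\<forall>E \<in> {E_r N \<delta> \<beta> \<theta>, E_p N \<delta> \<beta> \<theta>}.
           real N ^ 2 * \<theta> / 2 * (H N + 1 / (real N - 1)) \<le> E
         \<and> E \<le> real N * (real N - 1) * \<theta> * (H N + 1)"
proof -
  note N = assms(1) and th = assms(4)
  let ?p = "pp \<delta> \<beta> \<theta>" and ?q = "qq \<delta> \<beta> \<theta>"
  let ?K = "DD ?p ?q (N-1)" and ?Dn = "DD ?p ?q N"
  let ?t = "\<lambda>i. ?p^(i-1) * ?q^(N-1-i)"
  have pq: "?p + ?q = 1" "?p > 0" "?q > 0" by (rule pq_facts)+
  have Dn: "?Dn > 0" using DD_pos[OF pq(2,3)] N by simp
  have DK: "?Dn \<le> ?K" by (rule DD_ge[OF pq N])
  have rat: "real N * ?K \<le> 2 * (real N - 1) * ?Dn" by (rule DD_ratio[OF pq N])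
  have st: "(\<Sum>i=1..N-1. ?t i) = ?K" by (rule sum_t[OF N])
  have tpos: "\<And>i. 0 \<le> ?t i" using pq by simp
  have Er: "E_r N \<delta> \<beta> \<theta> = \<theta> / 2 * (\<Sum>i=1..N-1. (?K + ?t i) / ?Dn * real N ^ 2 * (1 / (real N - real i)))"
    unfolding E_r_def
  proof (intro arg_cong[where f = "\<lambda>x. \<theta> / 2 * x"] sum.cong refl)
    fix i assume i: "i \<in> {1..N-1}"
    have "real i * (real N - real i) / real i = real N - real i" using i by auto
    then show "(n_ent N \<delta> \<beta> \<theta> 1 i + n_ent N \<delta> \<beta> \<theta> (N - 1) i) * real i =
       (?K + ?t i) / ?Dn * real N ^ 2 * (1 / (real N - real i))"
      using term_eq[OF N i, of "real i"] by simp
  qed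
  have Ep: "E_p N \<delta> \<beta> \<theta> = \<theta> / 2 * (\<Sum>i=1..N-1. (?K + ?t i) / ?Dn * real N ^ 2 * (1 / real i))"
    unfolding E_p_def
  proof (intro arg_cong[where f = "\<lambda>x. \<theta> / 2 * x"] sum.cong refl)
    fix i assume i: "i \<in> {1..N-1}"
    have "real i * (real N - real i) / (real N - real i) = real i" using i by auto
    then show "(n_ent N \<delta> \<beta> \<theta> 1 i + n_ent N \<delta> \<beta> \<theta> (N - 1) i) * (real N - real i) =
       (?K + ?t i) / ?Dn * real N ^ 2 * (1 / real i)"
      using term_eq[OF N i, of "real N - real i"] by simp
  qed
  have w1: "1 / (real N - 1) \<le> 1 / real i \<and> 1 / real i \<le> 1 \<and> 0 \<le> ?t i" if "i \<in> {1..N-1}" for i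
  proof -
    have "1 \<le> real i" "real i \<le> real N - 1" using that N by auto
    then show ?thesis using tpos[of i] by (auto simp: frac_le)
  qed
  have w2: "1 / (real N - 1) \<le> 1 / (real N - real i) \<and> 1 / (real N - real i) \<le> 1 \<and> 0 \<le> ?t i"
    if "i \<in> {1..N-1}" for i
  proof -
    have "1 \<le> real N - real i" "real N - real i \<le> real N - 1" using that N by auto
    then show ?thesis using tpos[of i] by (auto simp: frac_le)
  qed
  have B1: "real N ^ 2 * \<theta> / 2 * (H N + 1 / (real N - 1)) \<le> E_r N \<delta> \<beta> \<theta>
         \<and> E_r N \<delta> \<beta> \<theta> \<le> real N * (real N - 1) * \<theta> * (H N + 1)"
    unfolding Er by (rule final_bound[OF N th Dn DK rat w2 st sum_w2[OF N]])
  have B2: "real N ^ 2 * \<theta> / 2 * (H N + 1 / (real N - 1)) \<le> E_p N \<delta> \<beta> \<theta>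
         \<and> E_p N \<delta> \<beta> \<theta> \<le> real N * (real N - 1) * \<theta> * (H N + 1)"
    unfolding Ep by (rule final_bound[OF N th Dn DK rat w1 st sum_w1])
  show ?thesis using B1 B2 by auto
qed

end
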